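(* Let $\Theta\subseteq F(V)$ be a $\mathrm{q}\L^{*}$-theory. Then $[\Theta]_\sim=\{[p]_\sim\in[F(V)]_\sim: p\in\Theta\}$ is a filter of the MV*-algebra $\langle [F(V)]_\sim;\oplus,-,[0]_\sim,[1]_\sim\rangle$, where $-[p]_\sim=[\neg p]_\sim$, $[p]_\sim\oplus[q]_\sim=[\neg p\to q]_\sim$ and $[0]_\sim=[p\to p]_\sim$.
   Context: Let $V=\{p_1,p_2,\ldots\}$ be a set of propositional variables and $F(V)$ the set of formulas built from $V$ and the constant $1$ with the binary connective $\to$ and the unary connectives $\neg$, ${}^{+}$, ${}^{-}$ (postfix ${}^+,{}^-$ bind tighter than $\neg$, which binds tighter than $\to$). Abbreviations: $p\vee q:=((p^{+}\to q^{+})^{+}\to(\neg p)^{-})\to((q^{-}\to p^{-})^{-}\to p^{-})$; an axiom written $A\leftrightarrow B$ stands for the two axioms $A\to B$ and $B\to A$. Axiom schemas of $\mathrm{q}\L^{*}$ (for all formulas $p,q,r$): (Q1) $(p\to q)\leftrightarrow(\neg q\to\neg p)$; (Q2) $1\leftrightarrow((1\to p)\to 1)$; (Q3) $p\leftrightarrow((q\to q)\to p)$; (Q4) $(p\to q)\leftrightarrow((q^{+}\to p^{-})\to(p^{+}\to q^{-}))$; (Q5) $\neg(p\to q)\leftrightarrow(q\to p)$; (Q6) $(p\to(\neg p\to q))^{+}\leftrightarrow(p^{+}\to(\neg p^{+}\to q^{+}))$; (Q7) $(p\to(q\vee r))\leftrightarrow((p\to r)\vee(p\to q))$; (Q8)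 $(p\vee(q\vee r))\leftrightarrow((p\vee q)\vee r)$; (Q9) $((p\to 1)\to((q\to 1)\to r))\to((q\to 1)\to((p\to 1)\to r))$; (Q10) $p\to 1$; (Q11) $((1\to 1)\to p^{+})\leftrightarrow((p\to 1)\to 1)$ and $((1\to 1)\to p^{-})\leftrightarrow((p\to\neg 1)\to\neg 1)$. Deduction rules: (R1) from $p$ and $p\to q$ infer $(r\to r)\to q$; (R2) from $(r\to r)\to(p\to q)$ infer $p\to q$; (R3) from $p\to q$ and $r\to t$ infer $(q\to r)\to(p\to t)$. For $\Gamma\subseteq F(V)$, $\Gamma\vdash q$ means there is a finite sequence ending in $q$ each member of which is an axiom, a member of $\Gamma$, or obtained from earlier members by a rule; $\Gamma^{\vdash}$ is the set of all such $q$. A $\mathrm{q}\L^{*}$-theory is a set $\Theta\subseteq F(V)$ with $\Theta^{\vdash}=\Theta$. The relation $p\sim q$ iff $\vdash p\to q$ and $\vdash q\to p$ (provable from the empty set) is a congruence and $[p]_\sim$ denotes the class of $p$. An MV*-algebra is an algebra $\langle B;\oplus,-,0,1\rangle$ of type $\langle2,1,0,0\rangle$ satisfying for all $x,y,z$: (MV*1) $x\oplus y=y\oplus x$; (MV*2) $(1\oplus x)\oplus(y\oplus(1\oplus z))=((1\oplus x)\oplus y)\oplus(1\oplus z)$; (MV*3) $x\oplus(-x)=0$; (MV*4) $(x\oplus 1)\oplus 1=1$; (MV*5) $x\oplus 0=x$; (MV*6) $-(x\oplus y)=(-x)\oplus(-y)$; (MV*7) $-(-x)=x$; (MV*8) $x\oplus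 y=(x^{+}\oplus y^{+})\oplus(x^{-}\oplus y^{-})$; (MV*9) $(-x\oplus(x\oplus y))^{+}=-(x^{+})\oplus(x^{+}\oplus y^{+})$; (MV*10) $x\vee y=y\vee x$; (MV*11) $x\vee(y\vee z)=(x\vee y)\vee z$; (MV*12) $x\oplus(y\vee z)=(x\oplus y)\vee(x\oplus z)$; where $x^{+}:=1\oplus(-1\oplus x)$, $x^{-}:=-1\oplus(1\oplus x)$, $x\vee y:=(x^{+}\oplus(-x^{+}\oplus y^{+})^{+})\oplus(x^{-}\oplus(-x^{-}\oplus y^{-})^{+})$. Write $y\ominus x:=y\oplus(-x)$. A filter of an MV*-algebra $\mathbf{B}$ is a subset $F\subseteq B$ such that: (F1) $\{x^{+}:x\in B\}\subseteq F$; (F2) if $x\in F$ and $y\ominus x\in F$ then $y\in F$; (F3) if $x\oplus y\in F$ and $t\in B$ then $(x\oplus t)\oplus(y\ominus t)\in F$. *)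

theory Defs
  imports Main
begin

datatype form = Var nat | One | Imp form form | Neg form | Pos form | Mns form

definition Vee :: "form \<Rightarrow> form \<Rightarrow> form" where
  "Vee p q = Imp (Imp (Pos (Imp (Pos p) (Pos q))) (Mns (Neg p)))
                  (Imp (Mns (Imp (Mns q) (Mns p))) (Mns p))"

text \<open>Axiom schemas of qL*; A <-> B stands for both implications.\<close>
inductive axiom :: "form \<Rightarrow> bool" where
  Q1a: "axiom (Imp (Imp p q) (Imp (Neg q) (Neg p)))"
| Q1b: "axiom (Imp (Imp (Neg q) (Neg p)) (Imp p q))"
| Q2a: "axiom (Imp One (Imp (Imp One p) One))"
| Q2b: "axiom (Imp (Imp (Imp One p) One) One)"
| Q3a: "axiom (Imp p (Imp (Imp q q) p))"
| Q3b: "axiom (Imp (Imp (Imp q q) p) p)"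
| Q4a: "axiom (Imp (Imp p q) (Imp (Imp (Pos q) (Mns p)) (Imp (Pos p) (Mns q))))"
| Q4b: "axiom (Imp (Imp (Imp (Pos q) (Mns p)) (Imp (Pos p) (Mns q))) (Imp p q))"
| Q5a: "axiom (Imp (Neg (Imp p q)) (Imp q p))"
| Q5b: "axiom (Imp (Imp q p) (Neg (Imp p q)))"
| Q6a: "axiom (Imp (Pos (Imp p (Imp (Neg p) q))) (Imp (Pos p) (Imp (Neg (Pos p)) (Pos q))))"
| Q6b: "axiom (Imp (Imp (Pos p) (Imp (Neg (Pos p)) (Pos q))) (Pos (Imp p (Imp (Neg p) q))))"
| Q7a: "axiom (Imp (Imp p (Vee q r)) (Vee (Imp p r) (Imp p q)))"
| Q7b: "axiom (Imp (Vee (Imp p r) (Imp p q)) (Imp p (Vee q r)))"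
| Q8a: "axiom (Imp (Vee p (Vee q r)) (Vee (Vee p q) r))"
| Q8b: "axiom (Imp (Vee (Vee p q) r) (Vee p (Vee q r)))"
| Q9: "axiom (Imp (Imp (Imp p One) (Imp (Imp q One) r)) (Imp (Imp q One) (Imp (Imp p One) r)))"
| Q10: "axiom (Imp p One)"
| Q11a: "axiom (Imp (Imp (Imp One One) (Pos p)) (Imp (Imp p One) One))"
| Q11b: "axiom (Imp (Imp (Imp p One) One) (Imp (Imp One One) (Pos p)))"
| Q11c: "axiom (Imp (Imp (Imp One One) (Mns p)) (Imp (Imp p (Neg One)) (Neg One)))"
| Q11d: "axiom (Imp (Imp (Imp p (Neg One)) (Neg One)) (Imp (Imp One One) (Mns p)))"

inductive deriv :: "form set \<Rightarrow> form \<Rightarrow> bool" where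
  ax: "axiom p \<Longrightarrow> deriv \<Gamma> p"
| hyp: "p \<in> \<Gamma> \<Longrightarrow> deriv \<Gamma> p"
| R1: "deriv \<Gamma> p \<Longrightarrow> deriv \<Gamma> (Imp p q) \<Longrightarrow> deriv \<Gamma> (Imp (Imp r r) q)"
| R2: "deriv \<Gamma> (Imp (Imp r r) (Imp p q)) \<Longrightarrow> deriv \<Gamma> (Imp p q)"
| R3: "deriv \<Gamma> (Imp p q) \<Longrightarrow> deriv \<Gamma> (Imp r t) \<Longrightarrow> deriv \<Gamma> (Imp (Imp q r) (Imp p t))"

definition is_theory :: "form set \<Rightarrow> bool" where
  "is_theory \<Theta> \<longleftrightarrow> {q. deriv \<Theta> q} = \<Theta>"

definition equiv_rel :: "form \<Rightarrow> form \<Rightarrow> bool" where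
  "equiv_rel p q \<longleftrightarrow> deriv {} (Imp p q) \<and> deriv {} (Imp q p)"

definition cls :: "form \<Rightarrow> form set" where
  "cls p = {q. equiv_rel p q}"

definition Lind :: "form set set" where
  "Lind = range cls"

text \<open>Operations on classes via a chosen representative (well defined since ~ is a congruence).\<close>
definition rep :: "form set \<Rightarrow> form" where
  "rep X = (SOME p. X = cls p)"

definition L_neg :: "form set \<Rightarrow> form set" where
  "L_neg X = cls (Neg (rep X))"

definition L_oplus :: "form set \<Rightarrow> form set \<Rightarrow> form set" where
  "L_oplus X Y = cls (Imp (Neg (rep X)) (rep Y))"

definition L_zero :: "form set" where
  "L_zero = cls (Imp One One)"

definition L_one :: "form set" where
  "L_one = cls One"

definition mv_pos :: "('a \<Rightarrow> 'a \<Rightarrow> 'a) \<Rightarrow> ('a \<Rightarrow> 'a) \<Rightarrow> 'a \<Rightarrow> 'a \<Rightarrow> 'a" where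
  "mv_pos pl ng e x = pl e (pl (ng e) x)"

definition is_filter :: "'a set \<Rightarrow> ('a \<Rightarrow> 'a \<Rightarrow> 'a) \<Rightarrow> ('a \<Rightarrow> 'a) \<Rightarrow> 'a \<Rightarrow> 'a \<Rightarrow> 'a set \<Rightarrow> bool" where
  "is_filter B pl ng z e F \<longleftrightarrow>
     F \<subseteq> B \<and>
     (\<forall>x\<in>B. mv_pos pl ng e x \<in> F) \<and>
     (\<forall>x\<in>B. \<forall>y\<in>B. x \<in> F \<longrightarrow> pl y (ng x) \<in> F \<longrightarrow> y \<in> F) \<and>
     (\<forall>x\<in>B. \<forall>y\<in>B. \<forall>t\<in>B. pl x y \<in> F \<longrightarrow> pl (pl x t) (pl y (ng t)) \<in> F)"

end

theory Submission
  imports Defs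
begin

lemma deriv_mono: "deriv \<Gamma> p \<Longrightarrow> \<Gamma> \<subseteq> \<Gamma>' \<Longrightarrow> deriv \<Gamma>' p"
  by (induction rule: deriv.induct) (auto intro: deriv.intros)

lemma d0: "deriv {} p \<Longrightarrow> deriv \<Gamma> p"
  using deriv_mono by blast

lemma dmp: "deriv \<Gamma> a \<Longrightarrow> deriv \<Gamma> (Imp a (Imp b c)) \<Longrightarrow> deriv \<Gamma> (Imp b c)"
  using deriv.R1[of \<Gamma> a "Imp b c" a] deriv.R2 by blast

lemma dtrans: "deriv \<Gamma> (Imp a b) \<Longrightarrow> deriv \<Gamma> (Imp b c) \<Longrightarrow> deriv \<Gamma> (Imp a c)"
  using deriv.R3[of \<Gamma> a b b c] deriv.R2 by blast

lemma drefl: "deriv \<Gamma> (Imp p p)"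
proof -
  have "deriv \<Gamma> (Imp (Neg p) (Neg p))"
    using deriv.R2[OF deriv.ax[OF axiom.Q1a[of p p]]] .
  then show ?thesis using dmp[OF _ deriv.ax[OF axiom.Q1b[of p p]]] by blast
qed

lemma dneg: "deriv \<Gamma> (Imp p q) \<Longrightarrow> deriv \<Gamma> (Imp (Neg q) (Neg p))"
  using dmp[OF _ deriv.ax[OF axiom.Q1a[of p q]]] by blast

lemma dimp: "deriv \<Gamma> (Imp a' a) \<Longrightarrow> deriv \<Gamma> (Imp b b') \<Longrightarrow> deriv \<Gamma> (Imp (Imp a b) (Imp a' b'))"
  using deriv.R3 by blast

lemma eq_refl: "equiv_rel p p" unfolding equiv_rel_def using drefl by blast
lemma eq_sym: "equiv_rel p q \<Longrightarrow> equiv_rel q p" unfolding equiv_rel_def by blast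
lemma eq_trans: "equiv_rel p q \<Longrightarrow> equiv_rel q r \<Longrightarrow> equiv_rel p r"
  unfolding equiv_rel_def using dtrans by blast
lemma eq_neg: "equiv_rel p q \<Longrightarrow> equiv_rel (Neg p) (Neg q)"
  unfolding equiv_rel_def using dneg by blast
lemma eq_imp: "equiv_rel a a' \<Longrightarrow> equiv_rel b b' \<Longrightarrow> equiv_rel (Imp a b) (Imp a' b')"
  unfolding equiv_rel_def using dimp by blast

lemma eq_q3: "equiv_rel p (Imp (Imp One One) p)"
  unfolding equiv_rel_def by (auto intro: deriv.ax axiom.intros)

lemma eq_q5: "equiv_rel (Neg (Imp p q)) (Imp q p)"
  unfolding equiv_rel_def by (auto intro: deriv.ax axiom.intros)

lemma eq_nn: "equiv_rel (Neg (Neg p)) p"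
proof -
  let ?a = "Imp (Imp One One) p"
  have 1: "equiv_rel (Neg (Neg p)) (Neg (Neg ?a))" using eq_neg[OF eq_neg[OF eq_q3]] .
  have 2: "equiv_rel (Neg (Neg ?a)) (Neg (Imp p (Imp One One)))" using eq_neg[OF eq_q5] .
  have 3: "equiv_rel (Neg (Imp p (Imp One One))) ?a" using eq_q5 .
  show ?thesis using eq_trans[OF eq_trans[OF eq_trans[OF 1 2] 3] eq_sym[OF eq_q3]] .
qed

lemma cls_eq: "cls p = cls q \<longleftrightarrow> equiv_rel p q"
  unfolding cls_def using eq_refl eq_sym eq_trans by blast

lemma rep_cls: "equiv_rel (rep (cls p)) p"
proof -
  have "cls p = cls (rep (cls p))" unfolding rep_def by (rule someI[of "\<lambda>q. cls p = cls q"]) simp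
  then show ?thesis using cls_eq eq_sym by blast
qed

lemma neg_cls: "L_neg (cls p) = cls (Neg p)"
  unfolding L_neg_def cls_eq using eq_neg[OF rep_cls] .

lemma oplus_cls: "L_oplus (cls a) (cls b) = cls (Imp (Neg a) b)"
  unfolding L_oplus_def cls_eq using eq_imp[OF eq_neg[OF rep_cls] rep_cls] .

lemma mem_iff:
  assumes "is_theory \<Theta>"
  shows "cls p \<in> cls ` \<Theta> \<longleftrightarrow> deriv \<Theta> (Imp (Imp One One) p)"
proof
  assume "cls p \<in> cls ` \<Theta>"
  then obtain t where t: "t \<in> \<Theta>" "equiv_rel p t" using cls_eq by (metis imageE)
  have "deriv \<Theta> t" using t(1) by (rule deriv.hyp)
  moreover have "deriv \<Theta> (Imp t p)" using t(2) d0 unfolding equiv_rel_def by blast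
  ultimately show "deriv \<Theta> (Imp (Imp One One) p)" using deriv.R1 by blast
next
  assume "deriv \<Theta> (Imp (Imp One One) p)"
  then have "Imp (Imp One One) p \<in> \<Theta>" using assms unfolding is_theory_def by blast
  moreover have "cls p = cls (Imp (Imp One One) p)" using cls_eq eq_q3 by blast
  ultimately show "cls p \<in> cls ` \<Theta>" by blast
qed

lemma imp_G: "deriv \<Gamma> (Imp a b) \<Longrightarrow> deriv \<Gamma> (Imp (Imp One One) (Imp a b))"
  using dmp[OF _ deriv.ax[OF axiom.Q3a[of "Imp a b" One]]] by blast

lemma G_imp: "deriv \<Gamma> (Imp (Imp One One) (Imp a b)) \<Longrightarrow> deriv \<Gamma> (Imp a b)"
  using deriv.R2 by blast

lemma dnn1: "deriv \<Gamma> (Imp (Neg (Neg p)) p)" using eq_nn unfolding equiv_rel_def using d0 by blast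
lemma dnn2: "deriv \<Gamma> (Imp p (Neg (Neg p)))" using eq_nn unfolding equiv_rel_def using d0 by blast

lemma F1_formula: "deriv {} (Imp (Neg One) (Imp (Neg (Neg One)) x))"
proof -
  have a: "deriv {} (Imp (Imp x One) One)" by (auto intro: deriv.ax axiom.intros)
  have b: "deriv {} (Imp (Imp (Imp x One) One) (Imp (Neg (Imp One x)) (Neg (Neg One))))"
    by (rule dimp) (auto intro: deriv.ax axiom.intros dnn2)
  have c: "deriv {} (Imp (Imp (Neg (Imp One x)) (Neg (Neg One))) (Imp (Neg One) (Imp One x)))"
    by (auto intro: deriv.ax axiom.intros)
  have d: "deriv {} (Imp (Imp (Neg One) (Imp One x)) (Imp (Neg One) (Imp (Neg (Neg One)) x)))"
    by (intro dimp drefl dnn1)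
  show ?thesis using dmp[OF a b] dmp[OF _ c] dmp[OF _ d] by blast
qed

theorem proposition5p5:
  assumes "is_theory \<Theta>"
  shows "is_filter Lind L_oplus L_neg L_zero L_one (cls ` \<Theta>)"
  unfolding is_filter_def
proof (intro conjI)
  note M = mem_iff[OF assms]
  show "cls ` \<Theta> \<subseteq> Lind" unfolding Lind_def by blast
  show "\<forall>x\<in>Lind. mv_pos L_oplus L_neg L_one x \<in> cls ` \<Theta>"
  proof
    fix X assume "X \<in> Lind"
    then obtain x where X: "X = cls x" unfolding Lind_def by blast
    have "mv_pos L_oplus L_neg L_one X = cls (Imp (Neg One) (Imp (Neg (Neg One)) x))"
      unfolding mv_pos_def X L_one_def neg_cls oplus_cls ..
    then show "mv_pos L_oplus L_neg L_one X \<in> cls ` \<Theta>"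
      using M imp_G d0[OF F1_formula] by simp
  qed
  show "\<forall>x\<in>Lind. \<forall>y\<in>Lind. x \<in> cls ` \<Theta> \<longrightarrow> L_oplus y (L_neg x) \<in> cls ` \<Theta> \<longrightarrow> y \<in> cls ` \<Theta>"
  proof (intro ballI impI)
    fix X Y assume "X \<in> Lind" "Y \<in> Lind"
    then obtain x y where X: "X = cls x" and Y: "Y = cls y" unfolding Lind_def by blast
    assume h1: "X \<in> cls ` \<Theta>" and h2: "L_oplus Y (L_neg X) \<in> cls ` \<Theta>"
    have 1: "deriv \<Theta> (Imp (Imp One One) x)" using h1 M X by simp
    have "deriv \<Theta> (Imp (Neg y) (Neg x))" using h2 M G_imp unfolding X Y neg_cls oplus_cls by blast
    then have "deriv \<Theta> (Imp x y)" using dmp[OF _ deriv.ax[OF axiom.Q1b[of y x]]] by blast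
    then have "deriv \<Theta> (Imp (Imp One One) y)" using dtrans[OF 1] by blast
    then show "Y \<in> cls ` \<Theta>" using M Y by simp
  qed
  show "\<forall>x\<in>Lind. \<forall>y\<in>Lind. \<forall>t\<in>Lind. L_oplus x y \<in> cls ` \<Theta> \<longrightarrow>
      L_oplus (L_oplus x t) (L_oplus y (L_neg t)) \<in> cls ` \<Theta>"
  proof (intro ballI impI)
    fix X Y T assume "X \<in> Lind" "Y \<in> Lind" "T \<in> Lind"
    then obtain x y t where X: "X = cls x" and Y: "Y = cls y" and T: "T = cls t"
      unfolding Lind_def by blast
    assume h: "L_oplus X Y \<in> cls ` \<Theta>"
    have "deriv \<Theta> (Imp (Neg x) y)" using h M G_imp unfolding X Y oplus_cls by blast
    then have "deriv \<Theta> (Imp (Neg y) (Neg (Neg x)))" by (rule dneg)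
    then have "deriv \<Theta> (Imp (Neg y) x)" using dtrans dnn1 by blast
    then have W: "deriv \<Theta> (Imp (Imp x (Neg t)) (Imp (Neg y) (Neg t)))" using dimp drefl by blast
    have A1: "deriv \<Theta> (Imp (Neg (Imp (Neg x) t)) (Imp t (Neg x)))" by (auto intro: deriv.ax axiom.intros)
    have A2: "deriv \<Theta> (Imp (Imp t (Neg x)) (Imp (Neg (Neg x)) (Neg t)))" by (auto intro: deriv.ax axiom.intros)
    have A3: "deriv \<Theta> (Imp (Imp (Neg (Neg x)) (Neg t)) (Imp x (Neg t)))" using dimp dnn2 drefl by blast
    have A: "deriv \<Theta> (Imp (Neg (Imp (Neg x) t)) (Imp x (Neg t)))" using dtrans[OF dtrans[OF A1 A2] A3] .
    have "deriv \<Theta> (Imp (Imp (Imp x (Neg t)) (Imp (Neg y) (Neg t)))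
                        (Imp (Neg (Imp (Neg x) t)) (Imp (Neg y) (Neg t))))"
      using dimp[OF A drefl] .
    then have "deriv \<Theta> (Imp (Neg (Imp (Neg x) t)) (Imp (Neg y) (Neg t)))" using dmp[OF W] by blast
    then show "L_oplus (L_oplus X T) (L_oplus Y (L_neg T)) \<in> cls ` \<Theta>"
      unfolding X Y T neg_cls oplus_cls using M imp_G by blast
  qed
qed

end
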